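(* For all integers $n,f$ with $1\le f\le n-2$, the wait-free Consensus task $\mathrm{Cons}(f+1,f)$ is not $C$-reducible to the $f$-resilient Consensus task $\mathrm{Cons}(n,f)$.
   Context: Model: a finite set of processes runs an asynchronous algorithm communicating by reliable message passing with unbounded delays and speeds; processes fail only by crashing. Time is $\mathcal T=\mathbb N$; a failure pattern $F$ for $\Pi$ is a nondecreasing map $\mathcal T\to2^\Pi$, $Faulty(F)=\bigcup_tF(t)$. A task $T=(P,f)$ consists of a binary agreement problem $P$ (mapping $(F,\vec V)$, $\vec V\in\{0,1\}^\Pi$, to a nonempty $P(F,\vec V)\subseteq\{0,1\}$) and a resiliency degree $f$. An algorithm solves $T$ if in every run with $|Faulty(F)|\le f$ and initial values $\vec V$: every correct process eventually decides, decisions are irrevocable, no two processes decide differently, and decisions lie in $P(F,\vec V)$. Binary Consensus $\mathrm{Cons}(n,f)=(\mathrm{Cons}_{\Pi},f)$ on $\Pi=\{1,\dots,n\}$: $\mathrm{Cons}_\Pi(F,\vec V)=\{v\}$ if all entries of $\vec V$ equal $v$, and $\{0,1\}$ otherwise. Oracles: for $T=(P,f)$ on process set $\Pi'$, $\mathcal O.T$ is a black box with consultants $\Pi'$; its history is a sequence of successive consultations, in each of which every consultant may submit at most one query in $\{0,1\}$ and the oracle returns a common response $d$ with $d\in P(F,\vec V)$ for every $\vec V$ extending the partial query vector (the oracle may use the whole failure pattern, including future crashes), and every correct querier gets the response whenever at least $|\Pi'|-f$ consultants query; $\mathcal O.T$ is the most general such oracle. $C$-reduction: $T_1\le_C T_2$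 if there is an algorithm solving $T_1$ whose processes, besides message passing, may consult a single oracle $\mathcal O.T_2'$ where $T_2'$ is a renamed copy of $T_2$ whose consultant set contains or is contained in the process set of $T_1$; consultants that are not processes of $T_1$ never query and count as crashed from the start for the oracle. $\le_C$ is transitive. *)

theory Defs
  imports Main
begin

datatype 'm inp = Msg nat 'm | OResp nat bool | NoInp

(* scheduled events: deliver message with global id i, deliver the oracle
   response of consultation k, or a step with no input *)
datatype ev = Recv nat | Resp nat | Idle

(* a (deterministic) algorithm: initial state from the input value,
   transition function (new state, messages to send as (destination, msg),
   optional query submitted to the oracle), and write-once decision output *)
record ('s, 'm) alg =
  a_init :: "nat \<Rightarrow> bool \<Rightarrow> 's"
  a_step :: "nat \<Rightarrow> 's \<Rightarrow> 'm inp \<Rightarrow> 's \<times> (nat \<times> 'm) list \<times> bool option"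
  a_dec  :: "'s \<Rightarrow> bool option"

record ('s, 'm) cfg =
  c_st  :: "nat \<Rightarrow> 's"
  c_msgs :: "(nat \<times> nat \<times> 'm) list"        (* (source, destination, message), in sending order *)
  c_dlv :: "nat set"                         (* ids of delivered messages *)
  c_nq  :: "nat \<Rightarrow> nat"                    (* number of queries submitted so far by a process *)
  c_q   :: "nat \<Rightarrow> nat \<Rightarrow> bool option"      (* c_q k p: query of p in consultation k *)
  c_rsp :: "(nat \<times> nat) set"                (* (k,p): response of consultation k delivered to p *)

definition fpattern :: "nat set \<Rightarrow> (nat \<Rightarrow> nat set) \<Rightarrow> bool" where
  "fpattern P F \<longleftrightarrow> mono F \<and> (\<forall>t. F t \<subseteq> P)"

definition faulty :: "(nat \<Rightarrow> nat set) \<Rightarrow> nat set" where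
  "faulty F = (\<Union>t. F t)"

definition cons_set :: "nat set \<Rightarrow> (nat \<Rightarrow> bool) \<Rightarrow> bool set" where
  "cons_set P V = (if \<forall>p\<in>P. V p then {True} else if \<forall>p\<in>P. \<not> V p then {False} else UNIV)"

(* admissible common response of the most general oracle O.Cons on consultants Q,
   given the partial query vector qv: valid for every input vector extending qv *)
definition resp_ok :: "nat set \<Rightarrow> (nat \<Rightarrow> bool option) \<Rightarrow> bool \<Rightarrow> bool" where
  "resp_ok Q qv d \<longleftrightarrow> (\<forall>V. (\<forall>p\<in>Q. \<forall>v. qv p = Some v \<longrightarrow> V p = v) \<longrightarrow> d \<in> cons_set Q V)"

definition init_cfg :: "('s, 'm) alg \<Rightarrow> (nat \<Rightarrow> bool) \<Rightarrow> ('s, 'm) cfg" where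
  "init_cfg A V = \<lparr>c_st = (\<lambda>p. a_init A p (V p)), c_msgs = [], c_dlv = {},
                   c_nq = (\<lambda>p. 0), c_q = (\<lambda>k p. None), c_rsp = {}\<rparr>"

definition inp_of :: "(nat \<Rightarrow> bool) \<Rightarrow> ('s, 'm) cfg \<Rightarrow> ev \<Rightarrow> 'm inp" where
  "inp_of ans c e = (case e of
      Recv i \<Rightarrow> Msg (fst (c_msgs c ! i)) (snd (snd (c_msgs c ! i)))
    | Resp k \<Rightarrow> OResp k (ans k)
    | Idle \<Rightarrow> NoInp)"

(* effect of a step of process p with event e; queries of non-consultants have no effect;
   the j-th query of a consultant belongs to consultation j *)
definition exec :: "('s, 'm) alg \<Rightarrow> nat set \<Rightarrow> (nat \<Rightarrow> bool) \<Rightarrow> ('s, 'm) cfg \<Rightarrow> nat \<Rightarrow> ev \<Rightarrow> ('s, 'm) cfg" where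
  "exec A Q ans c p e =
     (case a_step A p (c_st c p) (inp_of ans c e) of (s', out, q) \<Rightarrow>
       let isq = (q \<noteq> None \<and> p \<in> Q) in
       \<lparr>c_st = (c_st c)(p := s'),
        c_msgs = c_msgs c @ map (\<lambda>(d, m). (p, d, m)) out,
        c_dlv = (case e of Recv i \<Rightarrow> insert i (c_dlv c) | _ \<Rightarrow> c_dlv c),
        c_nq = (if isq then (c_nq c)(p := Suc (c_nq c p)) else c_nq c),
        c_q = (if isq then (c_q c)(c_nq c p := (c_q c (c_nq c p))(p := q)) else c_q c),
        c_rsp = (case e of Resp k \<Rightarrow> insert (k, p) (c_rsp c) | _ \<Rightarrow> c_rsp c)\<rparr>)"

definition enabled :: "nat set \<Rightarrow> nat set \<Rightarrow> (nat \<Rightarrow> nat set) \<Rightarrow> (nat \<Rightarrow> bool) \<Rightarrow> ('s, 'm) cfg \<Rightarrow> nat \<Rightarrow> nat \<Rightarrow> ev \<Rightarrow> bool" where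
  "enabled P Q F ans c t p e \<longleftrightarrow> p \<in> P \<and> p \<notin> F t \<and>
     (case e of
        Recv i \<Rightarrow> i < length (c_msgs c) \<and> fst (snd (c_msgs c ! i)) = p \<and> i \<notin> c_dlv c
      | Resp k \<Rightarrow> c_q c k p \<noteq> None \<and> (k, p) \<notin> c_rsp c \<and> resp_ok Q (c_q c k) (ans k)
      | Idle \<Rightarrow> True)"

definition is_run :: "('s, 'm) alg \<Rightarrow> nat set \<Rightarrow> nat set \<Rightarrow> (nat \<Rightarrow> nat set) \<Rightarrow> (nat \<Rightarrow> bool) \<Rightarrow> (nat \<Rightarrow> bool)
                      \<Rightarrow> (nat \<Rightarrow> (nat \<times> ev) option) \<Rightarrow> (nat \<Rightarrow> ('s, 'm) cfg) \<Rightarrow> bool" where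
  "is_run A P Q F V ans sched C \<longleftrightarrow> C 0 = init_cfg A V \<and>
     (\<forall>t. case sched t of
            None \<Rightarrow> C (Suc t) = C t
          | Some (p, e) \<Rightarrow> enabled P Q F ans (C t) t p e \<and> C (Suc t) = exec A Q ans (C t) p e)"

(* fairness: correct processes take infinitely many steps, reliable channels,
   oracle liveness (|Q| - f2 consultants query => every correct querier is answered) *)
definition fair :: "nat set \<Rightarrow> nat set \<Rightarrow> nat \<Rightarrow> (nat \<Rightarrow> nat set) \<Rightarrow> (nat \<Rightarrow> (nat \<times> ev) option) \<Rightarrow> (nat \<Rightarrow> ('s, 'm) cfg) \<Rightarrow> bool" where
  "fair P Q f2 F sched C \<longleftrightarrow>
     (\<forall>p \<in> P - faulty F. \<forall>t. \<exists>t' \<ge> t. \<exists>e. sched t' = Some (p, e)) \<and>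
     (\<forall>t i. i < length (c_msgs (C t)) \<and> fst (snd (c_msgs (C t) ! i)) \<in> P - faulty F
            \<longrightarrow> (\<exists>t'. i \<in> c_dlv (C t'))) \<and>
     (\<forall>k p t. p \<in> P - faulty F \<and> c_q (C t) k p \<noteq> None \<and>
            (\<exists>t'. card Q - f2 \<le> card {q \<in> Q. c_q (C t') k q \<noteq> None})
            \<longrightarrow> (\<exists>t'. (k, p) \<in> c_rsp (C t')))"

(* A solves Cons(m, f1) on processes {1..m} using the oracle O.Cons on consultants Q
   with resiliency f2 (consultants outside {1..m} never query) *)
definition solves_cons_with_oracle :: "('s, 'm) alg \<Rightarrow> nat \<Rightarrow> nat \<Rightarrow> nat set \<Rightarrow> nat \<Rightarrow> bool" where
  "solves_cons_with_oracle A m f1 Q f2 \<longleftrightarrow>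
     (\<forall>F V ans sched C.
        fpattern {1..m} F \<and> card (faulty F) \<le> f1 \<and>
        is_run A {1..m} Q F V ans sched C \<and> fair {1..m} Q f2 F sched C \<longrightarrow>
          (\<forall>p \<in> {1..m} - faulty F. \<exists>t. a_dec A (c_st (C t) p) \<noteq> None) \<and>
          (\<forall>p t t' v. p \<in> {1..m} \<and> t \<le> t' \<and> a_dec A (c_st (C t) p) = Some v
                       \<longrightarrow> a_dec A (c_st (C t') p) = Some v) \<and>
          (\<forall>p q t t' v w. p \<in> {1..m} \<and> q \<in> {1..m} \<and> a_dec A (c_st (C t) p) = Some v
                       \<and> a_dec A (c_st (C t') q) = Some w \<longrightarrow> v = w) \<and>
          (\<forall>p t v. p \<in> {1..m} \<and> a_dec A (c_st (C t) p) = Some v \<longrightarrow> v \<in> cons_set {1..m} V))"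

end

theory Submission
  imports Defs "HOL-Library.Nat_Bijection"
begin


primrec bld :: "('s, 'm) alg \<Rightarrow> nat set \<Rightarrow> (nat \<Rightarrow> bool) \<Rightarrow> (nat \<Rightarrow> bool)
   \<Rightarrow> (('s, 'm) cfg \<Rightarrow> nat \<Rightarrow> (nat \<times> ev) option) \<Rightarrow> nat \<Rightarrow> ('s, 'm) cfg" where
  "bld A Q ans V S 0 = init_cfg A V"
| "bld A Q ans V S (Suc t) = (case S (bld A Q ans V S t) t of None \<Rightarrow> bld A Q ans V S t
      | Some (p, e) \<Rightarrow> exec A Q ans (bld A Q ans V S t) p e)"

lemma bld_run:
  assumes "\<And>t p e. S (bld A Q ans V S t) t = Some (p, e) \<Longrightarrow> enabled P Q F ans (bld A Q ans V S t) t p e"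
  shows "is_run A P Q F V ans (\<lambda>t. S (bld A Q ans V S t) t) (bld A Q ans V S)"
  unfolding is_run_def
proof (intro conjI allI)
  fix t show "case S (bld A Q ans V S t) t of None \<Rightarrow> bld A Q ans V S (Suc t) = bld A Q ans V S t
     | Some (p, e) \<Rightarrow> enabled P Q F ans (bld A Q ans V S t) t p e \<and> bld A Q ans V S (Suc t) = exec A Q ans (bld A Q ans V S t) p e"
    using assms[of t] by (auto split: option.splits)
qed simp

definition shift :: "nat \<Rightarrow> ev \<Rightarrow> ev" where
  "shift L e = (case e of Recv i \<Rightarrow> Recv (i + L) | _ \<Rightarrow> e)"

definition sim :: "nat \<Rightarrow> nat \<Rightarrow> ('s, 'm) cfg \<Rightarrow> ('s, 'm) cfg \<Rightarrow> bool" where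
  "sim p L c1 c \<longleftrightarrow> c_st c p = c_st c1 p \<and> c_nq c p = c_nq c1 p \<and> (\<forall>k. c_q c k p = c_q c1 k p)
     \<and> length (c_msgs c) = L + length (c_msgs c1)
     \<and> (\<forall>i < length (c_msgs c1). c_msgs c ! (L + i) = c_msgs c1 ! i)
     \<and> (\<forall>i. (L + i \<in> c_dlv c) = (i \<in> c_dlv c1))"

lemma exec_fields:
  shows "c_st (exec A Q ans c p e) = (c_st c)(p := fst (a_step A p (c_st c p) (inp_of ans c e)))"
  and "c_msgs (exec A Q ans c p e) = c_msgs c @ map (\<lambda>(d, m). (p, d, m)) (fst (snd (a_step A p (c_st c p) (inp_of ans c e))))"
  and "c_dlv (exec A Q ans c p e) = (case e of Recv i \<Rightarrow> insert i (c_dlv c) | _ \<Rightarrow> c_dlv c)"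
  and "c_nq (exec A Q ans c p e) = (if snd (snd (a_step A p (c_st c p) (inp_of ans c e))) \<noteq> None \<and> p \<in> Q then (c_nq c)(p := Suc (c_nq c p)) else c_nq c)"
  and "c_q (exec A Q ans c p e) = (if snd (snd (a_step A p (c_st c p) (inp_of ans c e))) \<noteq> None \<and> p \<in> Q then (c_q c)(c_nq c p := (c_q c (c_nq c p))(p := snd (snd (a_step A p (c_st c p) (inp_of ans c e))))) else c_q c)"
  and "c_rsp (exec A Q ans c p e) = (case e of Resp k \<Rightarrow> insert (k, p) (c_rsp c) | _ \<Rightarrow> c_rsp c)"
  unfolding exec_def by (auto split: prod.splits simp: Let_def)

lemma sim_step:
  assumes s: "sim p L c1 c" and ne: "\<And>k. e \<noteq> Resp k"
    and ri: "\<And>i. e = Recv i \<Longrightarrow> i < length (c_msgs c1)"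
  shows "sim p L (exec A Q ans1 c1 p e) (exec A Q ans c p (shift L e))"
proof -
  have inp: "inp_of ans c (shift L e) = inp_of ans1 c1 e"
    using s ne ri by (cases e) (auto simp: inp_of_def shift_def sim_def add.commute)
  have aq2: "a_step A p (c_st c p) (inp_of ans c (shift L e)) = a_step A p (c_st c1 p) (inp_of ans1 c1 e)"
    using inp s by (simp add: sim_def)
  have d: "\<forall>i. (L + i \<in> c_dlv (exec A Q ans c p (shift L e))) = (i \<in> c_dlv (exec A Q ans1 c1 p e))"
    using s ne by (cases e) (auto simp: exec_fields sim_def shift_def add.commute)
  have m: "\<forall>i < length (c_msgs (exec A Q ans1 c1 p e)). c_msgs (exec A Q ans c p (shift L e)) ! (L + i) = c_msgs (exec A Q ans1 c1 p e) ! i"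
    using s aq2 by (auto simp: exec_fields sim_def nth_append)
  show ?thesis using s d m aq2 by (auto simp: exec_fields sim_def)
qed


lemma run_step:
  assumes "is_run A P Q F V ans sched C"
  shows "C (Suc t) = (case sched t of None \<Rightarrow> C t | Some (p, e) \<Rightarrow> exec A Q ans (C t) p e)"
    and "sched t = Some (p, e) \<Longrightarrow> enabled P Q F ans (C t) t p e"
  using assms unfolding is_run_def by (auto split: option.splits dest: spec[of _ t])

lemma run_msgs_prefix:
  assumes r: "is_run A P Q F V ans sched C" and "t \<le> t'"
  shows "\<exists>ys. c_msgs (C t') = c_msgs (C t) @ ys"
  using assms(2)
proof (induction t' rule: dec_induct)
  case base then show ?case by simp
next
  case (step n)
  then obtain ys where "c_msgs (C n) = c_msgs (C t) @ ys" by blast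
  then show ?case using run_step(1)[OF r, of n]
    by (auto split: option.splits simp: exec_fields)
qed

lemma run_nq_inv:
  assumes r: "is_run A P Q F V ans sched C"
  shows "c_q (C t) k p \<noteq> None \<Longrightarrow> k < c_nq (C t) p"
proof (induction t arbitrary: k p)
  case 0 then show ?case using r by (simp add: is_run_def init_cfg_def)
next
  case (Suc t)
  show ?case
  proof (cases "sched t")
    case None then show ?thesis using Suc run_step(1)[OF r, of t] by simp
  next
    case (Some a)
    then obtain p' e where a: "sched t = Some (p', e)" by (cases a) auto
    then show ?thesis using Suc run_step(1)[OF r, of t]
      by (auto simp: exec_fields split: if_splits) (metis less_SucI)+
  qed
qed

lemma run_q_persist:
  assumes r: "is_run A P Q F V ans sched C" and "t \<le> t'" and "c_q (C t) k p = Some v"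
  shows "c_q (C t') k p = Some v"
  using assms(2,3)
proof (induction t' rule: dec_induct)
  case base then show ?case by simp
next
  case (step n)
  have "k < c_nq (C n) p" using run_nq_inv[OF r, of n k p] step by simp
  then show ?case using step run_step(1)[OF r, of n]
    by (auto split: option.splits simp: exec_fields)
qed

lemma run_col_unch:
  assumes r: "is_run A P Q F V ans sched C" and "t1 \<le> t2"
    and ns: "\<And>t p e. t1 \<le> t \<Longrightarrow> t < t2 \<Longrightarrow> sched t = Some (p, e) \<Longrightarrow> p \<noteq> q"
  shows "c_st (C t2) q = c_st (C t1) q \<and> c_nq (C t2) q = c_nq (C t1) q \<and> (\<forall>k. c_q (C t2) k q = c_q (C t1) k q)"
  using assms(2) ns
proof (induction t2 rule: dec_induct)
  case base then show ?case by simp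
next
  case (step n)
  show ?case
  proof (cases "sched n")
    case None then show ?thesis using step run_step(1)[OF r, of n] by simp
  next
    case (Some a)
    then obtain p' e where a: "sched n = Some (p', e)" by (cases a) auto
    then have "p' \<noteq> q" using step.prems step.hyps by auto
    then show ?thesis using a step run_step(1)[OF r, of n]
      by (auto simp: exec_fields)
  qed
qed

lemma run_queriers:
  assumes r: "is_run A P Q F V ans sched C"
    and ns: "\<And>t p e. sched t = Some (p, e) \<Longrightarrow> p \<in> S"
  shows "c_q (C t) k q \<noteq> None \<Longrightarrow> q \<in> S"
proof (induction t arbitrary: k)
  case 0 then show ?case using r by (simp add: is_run_def init_cfg_def)
next
  case (Suc t)
  show ?case
  proof (cases "sched t")
    case None then show ?thesis using Suc run_step(1)[OF r, of t] by simp
  next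
    case (Some a)
    then obtain p' e where a: "sched t = Some (p', e)" by (cases a) auto
    then show ?thesis using Suc run_step(1)[OF r, of t] ns[OF a]
      by (auto simp: exec_fields split: if_splits)
  qed
qed

definition cand :: "bool \<Rightarrow> nat \<Rightarrow> ev" where
  "cand useR t = (let x = fst (prod_decode t) in
     if even x then Recv (x div 2) else if useR then Resp (x div 2) else Idle)"

definition gsched :: "nat set \<Rightarrow> nat set \<Rightarrow> (nat \<Rightarrow> nat set) \<Rightarrow> (nat \<Rightarrow> bool) \<Rightarrow> bool \<Rightarrow> nat
    \<Rightarrow> ('s, 'm) cfg \<Rightarrow> nat \<Rightarrow> (nat \<times> ev) option" where
  "gsched P Q F ans useR p c t =
     (if enabled P Q F ans c t p (cand useR t) then Some (p, cand useR t) else Some (p, Idle))"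

lemma cand_recv: "cand useR (prod_encode (2 * i, s)) = Recv i"
  by (simp add: cand_def)

lemma cand_resp: "cand True (prod_encode (2 * k + 1, s)) = Resp k"
  by (simp add: cand_def)

lemma cand_noresp: "cand False t \<noteq> Resp k"
  by (simp add: cand_def Let_def)

lemma gsched_enabled:
  "p \<in> P \<Longrightarrow> p \<notin> F t \<Longrightarrow> gsched P Q F ans useR p c t = Some (p', e) \<Longrightarrow> enabled P Q F ans c t p' e"
  by (auto simp: gsched_def enabled_def split: if_splits)

lemma gsched_proc: "gsched P Q F ans useR p c t = Some (p', e) \<Longrightarrow> p' = p"
  by (auto simp: gsched_def split: if_splits)

lemma gs_fair:
  assumes r: "is_run A P Q F V ans sched C"
    and gs: "\<And>t. T \<le> t \<Longrightarrow> sched t = gsched P Q F ans useR p (C t) t"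
    and pP: "p \<in> P" and nF: "\<And>t. T \<le> t \<Longrightarrow> p \<notin> F t"
  shows "\<forall>t. \<exists>t' \<ge> t. \<exists>e. sched t' = Some (p, e)"
    and "i < length (c_msgs (C t)) \<Longrightarrow> fst (snd (c_msgs (C t) ! i)) = p \<Longrightarrow> \<exists>t'. i \<in> c_dlv (C t')"
    and "useR \<Longrightarrow> c_q (C t) k p \<noteq> None \<Longrightarrow> (\<And>t'. t \<le> t' \<Longrightarrow> T \<le> t' \<Longrightarrow> resp_ok Q (c_q (C t') k) (ans k))
         \<Longrightarrow> \<exists>t'. (k, p) \<in> c_rsp (C t')"
proof -
  show "\<forall>t. \<exists>t' \<ge> t. \<exists>e. sched t' = Some (p, e)"
  proof
    fix t show "\<exists>t' \<ge> t. \<exists>e. sched t' = Some (p, e)"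
      by (rule exI[of _ "t + T"]) (auto simp: gs gsched_def)
  qed
next
  assume i: "i < length (c_msgs (C t))" and d: "fst (snd (c_msgs (C t) ! i)) = p"
  define t'' where "t'' = prod_encode (2 * i, t + T)"
  have le: "t + T \<le> t''" unfolding t''_def by (rule le_prod_encode_2)
  obtain ys where ys: "c_msgs (C t'') = c_msgs (C t) @ ys" using run_msgs_prefix[OF r, of t t''] le by auto
  show "\<exists>t'. i \<in> c_dlv (C t')"
  proof (cases "i \<in> c_dlv (C t'')")
    case True then show ?thesis by blast
  next
    case False
    have en: "enabled P Q F ans (C t'') t'' p (Recv i)"
      using False i d ys pP nF[of t''] le by (auto simp: enabled_def nth_append)
    have "sched t'' = Some (p, Recv i)" using gs[of t''] le en
      by (simp add: gsched_def t''_def cand_recv)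
    then have "C (Suc t'') = exec A Q ans (C t'') p (Recv i)" using run_step(1)[OF r, of t''] by simp
    then show ?thesis by (intro exI[of _ "Suc t''"]) (simp add: exec_fields)
  qed
next
  assume u: useR and q: "c_q (C t) k p \<noteq> None"
    and ok: "\<And>t'. t \<le> t' \<Longrightarrow> T \<le> t' \<Longrightarrow> resp_ok Q (c_q (C t') k) (ans k)"
  define t'' where "t'' = prod_encode (2 * k + 1, t + T)"
  have le: "t + T \<le> t''" unfolding t''_def by (rule le_prod_encode_2)
  have q2: "c_q (C t'') k p \<noteq> None" using run_q_persist[OF r, of t t''] q le by auto
  show "\<exists>t'. (k, p) \<in> c_rsp (C t')"
  proof (cases "(k, p) \<in> c_rsp (C t'')")
    case True then show ?thesis by blast
  next
    case False
    have en: "enabled P Q F ans (C t'') t'' p (Resp k)"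
      using False q2 ok[of t''] pP nF[of t''] le by (auto simp: enabled_def)
    have c: "cand useR t'' = Resp k" using u cand_resp[of k "t + T"] by (simp add: t''_def)
    have "sched t'' = Some (p, Resp k)" using gs[of t''] le en c
      by (simp add: gsched_def)
    then have "C (Suc t'') = exec A Q ans (C t'') p (Resp k)" using run_step(1)[OF r, of t''] by simp
    then show ?thesis by (intro exI[of _ "Suc t''"]) (simp add: exec_fields)
  qed
qed


lemma faulty_const[simp]: "faulty (\<lambda>_. X) = X"
  by (simp add: faulty_def)

lemma cons_set_const: "P \<noteq> {} \<Longrightarrow> cons_set P (\<lambda>_. v) = {v}"
  by (cases v) (auto simp: cons_set_def)

lemma gsched_shape:
  assumes "gsched P Q F ans False p c t = Some (p', e)"
  shows "p' = p \<and> (\<forall>k. e \<noteq> Resp k)"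
  using assms cand_noresp by (auto simp: gsched_def split: if_splits)

lemma card_le1: "X \<subseteq> {p} \<Longrightarrow> card X \<le> 1"
  using card_mono[of "{p}" X] by simp

lemma shift_0[simp]: "shift 0 e = e"
  by (cases e) (auto simp: shift_def)

lemma sim_enabled:
  assumes s: "sim p L c1 c" and en: "enabled P1 Q1 F1 ans1 c1 t1 p e" and ne: "\<And>k. e \<noteq> Resp k"
    and pP: "p \<in> P" and nF: "p \<notin> F t"
  shows "enabled P Q F ans c t p (shift L e)"
  using s en ne pP nF by (cases e) (auto simp: enabled_def sim_def shift_def add.commute)

lemma resp_ok_some:
  assumes "qv q = Some v" and "q \<in> Q"
  shows "resp_ok Q qv v"
  using assms unfolding resp_ok_def cons_set_def by auto

lemma run_dlv_lt:
  assumes r: "is_run A P Q F V ans sched C"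
  shows "\<forall>i \<in> c_dlv (C t). i < length (c_msgs (C t))"
proof (induction t)
  case 0 then show ?case using r by (simp add: is_run_def init_cfg_def)
next
  case (Suc t)
  show ?case
  proof (cases "sched t")
    case None then show ?thesis using Suc run_step(1)[OF r, of t] by simp
  next
    case (Some a)
    then obtain p' e where a: "sched t = Some (p', e)" by (cases a) auto
    have en: "enabled P Q F ans (C t) t p' e" using run_step(2)[OF r a] .
    have cs: "C (Suc t) = exec A Q ans (C t) p' e" using run_step(1)[OF r, of t] a by simp
    have len: "length (c_msgs (C t)) \<le> length (c_msgs (C (Suc t)))" by (simp add: cs exec_fields)
    have "c_dlv (C (Suc t)) \<subseteq> c_dlv (C t) \<union> {j. e = Recv j}"
      by (cases e) (auto simp: cs exec_fields)
    moreover have "\<forall>j. e = Recv j \<longrightarrow> j < length (c_msgs (C t))" using en by (auto simp: enabled_def)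
    ultimately show ?thesis using Suc.IH len by fastforce
  qed
qed



lemma solo:
  fixes A :: "('s, 'm) alg"
  assumes sol: "solves_cons_with_oracle A m f Q f" and m: "m = f + 1" and fQ: "finite Q"
    and cQ: "f + 2 \<le> card Q" and p: "p \<in> {1..m}"
  shows "\<exists>T. a_dec A (c_st (bld A Q (\<lambda>_. True) (\<lambda>_. v)
            (\<lambda>c t. gsched {1..m} Q (\<lambda>_. {1..m} - {p}) (\<lambda>_. True) False p c t) T) p) = Some v"
proof -
  define F where "F = (\<lambda>_::nat. {1..m} - {p})"
  define S :: "('s, 'm) cfg \<Rightarrow> nat \<Rightarrow> (nat \<times> ev) option" where "S = (\<lambda>c t. gsched {1..m} Q F (\<lambda>_. True) False p c t)"
  define C where "C = bld A Q (\<lambda>_. True) (\<lambda>_. v) S"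
  define sc where "sc = (\<lambda>t. S (C t) t)"
  have run: "is_run A {1..m} Q F (\<lambda>_. v) (\<lambda>_. True) sc C"
    unfolding sc_def C_def
    by (rule bld_run) (use p in \<open>auto simp: S_def F_def intro: gsched_enabled\<close>)
  have shp: "\<And>t p' e. sc t = Some (p', e) \<Longrightarrow> p' = p"
    by (auto simp: sc_def S_def dest: gsched_proc)
  have fp: "fpattern {1..m} F" by (auto simp: fpattern_def F_def mono_def)
  have cf: "card (faulty F) \<le> f" using p m by (simp add: F_def card_Diff_singleton)
  have gsc: "\<And>t. 0 \<le> t \<Longrightarrow> sc t = gsched {1..m} Q F (\<lambda>_. True) False p (C t) t"
    by (simp add: sc_def S_def)
  have nF: "\<And>t. 0 \<le> t \<Longrightarrow> p \<notin> F t" by (simp add: F_def)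
  have pe: "{1..m} - faulty F = {p}" using p by (simp add: F_def Diff_Diff_Int)
  have fr: "fair {1..m} Q f F sc C"
    unfolding fair_def
  proof (intro conjI allI impI ballI)
    fix p' t assume "p' \<in> {1..m} - faulty F"
    then have "p' = p" unfolding pe by simp
    then show "\<exists>t'\<ge>t. \<exists>e. sc t' = Some (p', e)"
      using gs_fair(1)[OF run gsc p nF, rule_format, of t] by simp
  next
    fix t i assume a: "i < length (c_msgs (C t)) \<and> fst (snd (c_msgs (C t) ! i)) \<in> {1..m} - faulty F"
    then have d: "fst (snd (c_msgs (C t) ! i)) = p" unfolding pe by simp
    show "\<exists>t'. i \<in> c_dlv (C t')"
      by (rule gs_fair(2)[OF run gsc p nF]) (use a d in simp_all)
  next
    fix k p' t
    assume a: "p' \<in> {1..m} - faulty F \<and> c_q (C t) k p' \<noteq> None \<and>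
       (\<exists>t'. card Q - f \<le> card {q \<in> Q. c_q (C t') k q \<noteq> None})"
    then obtain t' where c: "card Q - f \<le> card {q \<in> Q. c_q (C t') k q \<noteq> None}" by blast
    have "{q \<in> Q. c_q (C t') k q \<noteq> None} \<subseteq> {p}"
      using run_queriers[OF run, of "{p}"] shp by auto
    then have "card {q \<in> Q. c_q (C t') k q \<noteq> None} \<le> 1" by (rule card_le1)
    then show "\<exists>t'. (k, p') \<in> c_rsp (C t')" using c cQ by linarith
  qed
  note H = sol[unfolded solves_cons_with_oracle_def, THEN spec[of _ F], THEN spec[of _ "\<lambda>_. v"],
     THEN spec[of _ "\<lambda>_. True"], THEN spec[of _ sc], THEN spec[of _ C], THEN mp, OF conjI[OF fp conjI[OF cf conjI[OF run fr]]]]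
  have pnf: "p \<in> {1..m} - faulty F" using pe by simp
  obtain T where T: "a_dec A (c_st (C T) p) \<noteq> None" using conjunct1[OF H] pnf by blast
  then obtain w where w: "a_dec A (c_st (C T) p) = Some w" by blast
  have "w \<in> cons_set {1..m} (\<lambda>_. v)"
    using conjunct2[OF conjunct2[OF conjunct2[OF H]], rule_format, of p T w] p w by blast
  then have "w = v" using p cons_set_const[of "{1..m}" v] by auto
  then show ?thesis using w unfolding C_def S_def F_def by blast
qed




theorem mainTheorem17:
  fixes n f :: nat and Q :: "nat set" and A :: "('s, 'm) alg"
  assumes "1 \<le> f" and "f + 2 \<le> n"
    and "finite Q" and "card Q = n"
    and "Q \<subseteq> {1..f+1} \<or> {1..f+1} \<subseteq> Q"
  shows "\<not> solves_cons_with_oracle A (f + 1) f Q f"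
proof
  assume sol: "solves_cons_with_oracle A (f + 1) f Q f"
  have f1: "1 \<le> f" and fQ: "finite Q" and cQ: "f + 2 \<le> card Q" using assms by auto
  have PQ: "{1..f+1} \<subseteq> Q"
  proof -
    have "\<not> Q \<subseteq> {1..f+1}"
    proof
      assume "Q \<subseteq> {1..f+1}"
      then have "card Q \<le> card {1..f+1::nat}" by (rule card_mono[rotated]) simp
      then show False using cQ by simp
    qed
    then show ?thesis using assms(5) by blast
  qed
  define P where "P = {1..f+1::nat}"
  have p1: "1 \<in> P" and p2: "2 \<in> P" using f1 by (auto simp: P_def)
  have q2: "2 \<in> Q" using PQ p2 by (auto simp: P_def)
  define F0 where "F0 = (\<lambda>_::nat. {1..f+1} - {1::nat})"
  define S0 :: "('s, 'm) cfg \<Rightarrow> nat \<Rightarrow> (nat \<times> ev) option"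
    where "S0 = (\<lambda>c t. gsched {1..f+1} Q F0 (\<lambda>_. True) False 1 c t)"
  define R0 where "R0 = bld A Q (\<lambda>_. True) (\<lambda>_. False) S0"
  define F1 where "F1 = (\<lambda>_::nat. {1..f+1} - {2::nat})"
  define S1 :: "('s, 'm) cfg \<Rightarrow> nat \<Rightarrow> (nat \<times> ev) option"
    where "S1 = (\<lambda>c t. gsched {1..f+1} Q F1 (\<lambda>_. True) False 2 c t)"
  define R1 where "R1 = bld A Q (\<lambda>_. True) (\<lambda>_. True) S1"
  obtain T0 where T0: "a_dec A (c_st (R0 T0) 1) = Some False"
    using solo[OF sol _ fQ cQ, of 1 False] p1 by (auto simp: P_def R0_def S0_def F0_def)
  obtain T1 where T1: "a_dec A (c_st (R1 T1) 2) = Some True"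
    using solo[OF sol _ fQ cQ, of 2 True] p2 by (auto simp: P_def R1_def S1_def F1_def)
  have run0: "is_run A P Q F0 (\<lambda>_. False) (\<lambda>_. True) (\<lambda>t. S0 (R0 t) t) R0"
    unfolding R0_def P_def apply (rule bld_run) apply (rule gsched_enabled[of 1])
    using p1 by (auto simp: S0_def F0_def P_def)
  have run1: "is_run A P Q F1 (\<lambda>_. True) (\<lambda>_. True) (\<lambda>t. S1 (R1 t) t) R1"
    unfolding R1_def P_def apply (rule bld_run) apply (rule gsched_enabled[of 2])
    using p2 by (auto simp: S1_def F1_def P_def)
  have sh0: "\<And>t p e. S0 (R0 t) t = Some (p, e) \<Longrightarrow> p = 1 \<and> (\<forall>k. e \<noteq> Resp k) \<and> enabled P Q F0 (\<lambda>_. True) (R0 t) t p e"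
    using run_step(2)[OF run0] by (auto simp: S0_def dest: gsched_shape)
  have sh1: "\<And>t p e. S1 (R1 t) t = Some (p, e) \<Longrightarrow> p = 2 \<and> (\<forall>k. e \<noteq> Resp k) \<and> enabled P Q F1 (\<lambda>_. True) (R1 t) t p e"
    using run_step(2)[OF run1] by (auto simp: S1_def dest: gsched_shape)
  have S0_some: "\<And>t. \<exists>e. S0 (R0 t) t = Some (1, e)"
    by (auto simp: S0_def gsched_def)
  have S1_some: "\<And>t. \<exists>e. S1 (R1 t) t = Some (2, e)"
    by (auto simp: S1_def gsched_def)
  define L where "L = length (c_msgs (R0 T0))"
  define ans where "ans = (\<lambda>k. case c_q (R1 T1) k 2 of Some v \<Rightarrow> v | None \<Rightarrow> True)"
  define F where "F = (\<lambda>t. if t < T0 + T1 then {3..f+1} else {2..f+1::nat})"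
  define V where "V = (\<lambda>x::nat. x \<noteq> 1)"
  define SR :: "('s, 'm) cfg \<Rightarrow> nat \<Rightarrow> (nat \<times> ev) option" where
    "SR = (\<lambda>c t. if t < T0 then S0 (R0 t) t
       else if t < T0 + T1 then map_option (\<lambda>(p, e). (p, shift L e)) (S1 (R1 (t - T0)) (t - T0))
       else gsched P Q F ans True 1 c t)"
  define R where "R = bld A Q ans V SR"
  have Rsuc: "\<And>t. R (Suc t) = (case SR (R t) t of None \<Rightarrow> R t | Some (p, e) \<Rightarrow> exec A Q ans (R t) p e)"
    unfolding R_def by simp
  have R0suc: "\<And>t. R0 (Suc t) = (case S0 (R0 t) t of None \<Rightarrow> R0 t | Some (p, e) \<Rightarrow> exec A Q (\<lambda>_. True) (R0 t) p e)"
    unfolding R0_def by simp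
  have R1suc: "\<And>t. R1 (Suc t) = (case S1 (R1 t) t of None \<Rightarrow> R1 t | Some (p, e) \<Rightarrow> exec A Q (\<lambda>_. True) (R1 t) p e)"
    unfolding R1_def by simp
  have F1: "\<And>t. 1 \<notin> F t" by (simp add: F_def)
  have F2: "\<And>t. t < T0 + T1 \<Longrightarrow> 2 \<notin> F t" by (simp add: F_def)
  have SR0: "\<And>t. t < T0 \<Longrightarrow> SR (R t) t = S0 (R0 t) t" by (simp add: SR_def)
  have SR1: "\<And>t. t < T1 \<Longrightarrow> SR (R (T0 + t)) (T0 + t) = map_option (\<lambda>(p, e). (p, shift L e)) (S1 (R1 t) t)"
    by (simp add: SR_def)
  have SR2: "\<And>t. T0 + T1 \<le> t \<Longrightarrow> SR (R t) t = gsched P Q F ans True 1 (R t) t"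
    by (simp add: SR_def)
  have ph1: "t \<le> T0 \<Longrightarrow> sim 1 0 (R0 t) (R t) \<and> c_st (R t) 2 = a_init A 2 True \<and> c_nq (R t) 2 = 0
      \<and> (\<forall>k. c_q (R t) k 2 = None)" for t
  proof (induction t)
    case 0
    have "R 0 = init_cfg A V" "R0 0 = init_cfg A (\<lambda>_. False)" by (simp_all add: R_def R0_def)
    then show ?case by (simp add: sim_def init_cfg_def V_def)
  next
    case (Suc t)
    then have t: "t < T0" by simp
    obtain e where e: "S0 (R0 t) t = Some (1, e)" using S0_some by blast
    have ne: "\<forall>k. e \<noteq> Resp k" and en: "enabled P Q F0 (\<lambda>_. True) (R0 t) t 1 e" using sh0[OF e] by auto
    have r: "R (Suc t) = exec A Q ans (R t) 1 e" using Rsuc[of t] SR0[OF t] e by simp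
    have r0: "R0 (Suc t) = exec A Q (\<lambda>_. True) (R0 t) 1 e" using R0suc[of t] e by simp
    have IH: "sim 1 0 (R0 t) (R t) \<and> c_st (R t) 2 = a_init A 2 True \<and> c_nq (R t) 2 = 0
      \<and> (\<forall>k. c_q (R t) k 2 = None)" using Suc t by simp
    have rc: "\<And>i. e = Recv i \<Longrightarrow> i < length (c_msgs (R0 t))" using en by (auto simp: enabled_def)
    have "sim 1 0 (R0 (Suc t)) (R (Suc t))"
      using sim_step[OF conjunct1[OF IH] ne[rule_format] rc, of A Q "\<lambda>_. True" ans] r r0 by simp
    then show ?case using IH r by (simp add: exec_fields)
  qed
  have dl0: "\<forall>i \<in> c_dlv (R0 T0). i < L" using run_dlv_lt[OF run0, of T0] by (simp add: L_def)
  have ph2: "t \<le> T1 \<Longrightarrow> sim 2 L (R1 t) (R (T0 + t))" for t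
  proof (induction t)
    case 0
    have a: "R1 0 = init_cfg A (\<lambda>_. True)" by (simp add: R1_def)
    have b: "sim 1 0 (R0 T0) (R T0) \<and> c_st (R T0) 2 = a_init A 2 True \<and> c_nq (R T0) 2 = 0
      \<and> (\<forall>k. c_q (R T0) k 2 = None)" using ph1 by simp
    have c: "\<forall>i. L + i \<notin> c_dlv (R T0)"
    proof
      fix i
      have "(0 + (L + i) \<in> c_dlv (R T0)) = (L + i \<in> c_dlv (R0 T0))" using b unfolding sim_def by blast
      then show "L + i \<notin> c_dlv (R T0)" using dl0 by auto
    qed
    show ?case using a b c by (auto simp: sim_def init_cfg_def L_def)
  next
    case (Suc t)
    then have t: "t < T1" by simp
    obtain e where e: "S1 (R1 t) t = Some (2, e)" using S1_some by blast
    have ne: "\<forall>k. e \<noteq> Resp k" and en: "enabled P Q F1 (\<lambda>_. True) (R1 t) t 2 e" using sh1[OF e] by auto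
    have r: "R (T0 + Suc t) = exec A Q ans (R (T0 + t)) 2 (shift L e)" using Rsuc[of "T0 + t"] SR1[OF t] e by simp
    have r1: "R1 (Suc t) = exec A Q (\<lambda>_. True) (R1 t) 2 e" using R1suc[of t] e by simp
    have IH: "sim 2 L (R1 t) (R (T0 + t))" using Suc t by simp
    have rc: "\<And>i. e = Recv i \<Longrightarrow> i < length (c_msgs (R1 t))" using en by (auto simp: enabled_def)
    show ?case
      using sim_step[OF IH ne[rule_format] rc, of A Q "\<lambda>_. True" ans] r r1 by simp
  qed
  have enR: "enabled P Q F ans (R t) t p e" if se: "SR (R t) t = Some (p, e)" for t p e
  proof -
    consider (a) "t < T0" | (b) "T0 \<le> t" "t < T0 + T1" | (c) "T0 + T1 \<le> t" by linarith
    then show ?thesis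
    proof cases
      case a
      have s0: "S0 (R0 t) t = Some (p, e)" using se SR0[OF a] by simp
      have x: "p = 1" and ne: "\<forall>k. e \<noteq> Resp k" and en: "enabled P Q F0 (\<lambda>_. True) (R0 t) t p e"
        using sh0[OF s0] by blast+
      have sm: "sim p 0 (R0 t) (R t)" using ph1[of t] a x by simp
      have "enabled P Q F ans (R t) t p (shift 0 e)"
        by (rule sim_enabled[OF sm en ne[rule_format]]) (use x p1 F1 in simp_all)
      then show ?thesis by simp
    next
      case b
      define u where "u = t - T0"
      have tu: "t = T0 + u" and u: "u < T1" using b by (auto simp: u_def)
      obtain e' where e': "S1 (R1 u) u = Some (2, e')" using S1_some by blast
      have x: "p = 2" "e = shift L e'" using se SR1[OF u] e' tu by auto
      have ne: "\<forall>k. e' \<noteq> Resp k" and en: "enabled P Q F1 (\<lambda>_. True) (R1 u) u 2 e'"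
        using sh1[OF e'] by blast+
      have sm: "sim 2 L (R1 u) (R t)" using ph2[of u] u tu by simp
      have "enabled P Q F ans (R t) t 2 (shift L e')"
        by (rule sim_enabled[OF sm en ne[rule_format]]) (use p2 F2[of t] b in simp_all)
      then show ?thesis using x by simp
    next
      case c
      have g: "gsched P Q F ans True 1 (R t) t = Some (p, e)" using se SR2[OF c] by simp
      show ?thesis by (rule gsched_enabled[OF p1 F1 g])
    qed
  qed
  define scR where "scR = (\<lambda>t. SR (R t) t)"
  have runR: "is_run A P Q F V ans scR R"
    unfolding scR_def R_def by (rule bld_run) (use enR in \<open>simp add: R_def\<close>)
  have procR: "p \<in> {1, 2}" if se: "scR t = Some (p, e)" for t p e
  proof -
    consider (a) "t < T0" | (b) "T0 \<le> t" "t < T0 + T1" | (c) "T0 + T1 \<le> t" by linarith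
    then show "p \<in> {1, 2}"
    proof cases
      case a
      have s0: "S0 (R0 t) t = Some (p, e)" using se SR0[OF a] by (simp add: scR_def)
      show ?thesis using sh0[OF s0] by simp
    next
      case b
      define u where "u = t - T0"
      have tu: "t = T0 + u" and u: "u < T1" using b by (auto simp: u_def)
      obtain e' where e': "S1 (R1 u) u = Some (2, e')" using S1_some by blast
      have "p = 2" using se SR1[OF u] e' tu by (simp add: scR_def)
      then show ?thesis by simp
    next
      case c
      have g: "gsched P Q F ans True 1 (R t) t = Some (p, e)" using se SR2[OF c] by (simp add: scR_def)
      show ?thesis using gsched_proc[OF g] by simp
    qed
  qed
  have proc3: "p = 1" if c: "T0 + T1 \<le> t" and se: "scR t = Some (p, e)" for t p e
  proof -
    have g: "gsched P Q F ans True 1 (R t) t = Some (p, e)" using se SR2[OF c] by (simp add: scR_def)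
    show ?thesis using gsched_proc[OF g] .
  qed
  have fF: "faulty F = {2..f+1}"
  proof -
    have "\<And>t. F t \<subseteq> {2..f+1}" by (auto simp: F_def)
    moreover have "F (T0 + T1) = {2..f+1}" by (simp add: F_def)
    ultimately show ?thesis unfolding faulty_def by (intro equalityI UN_least) (auto intro!: UN_upper[of "T0 + T1"])
  qed
  have pe: "P - faulty F = {1}" using f1 by (auto simp: fF P_def)
  have fp: "fpattern P F" unfolding fpattern_def mono_def F_def P_def by auto
  have cf: "card (faulty F) \<le> f" by (simp add: fF)
  have gsc: "\<And>t. T0 + T1 \<le> t \<Longrightarrow> scR t = gsched P Q F ans True 1 (R t) t"
    using SR2 by (simp add: scR_def)
  have F1': "\<And>t. T0 + T1 \<le> t \<Longrightarrow> 1 \<notin> F t" using F1 by simp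
  note GF = gs_fair[where T="T0 + T1" and useR=True and p=1, OF runR gsc p1 F1']
  have fr: "fair P Q f F scR R"
    unfolding fair_def
  proof (intro conjI allI impI ballI)
    fix p' t assume "p' \<in> P - faulty F"
    then have "p' = 1" unfolding pe by simp
    then show "\<exists>t'\<ge>t. \<exists>e. scR t' = Some (p', e)"
      using GF(1)[rule_format, of t] by simp
  next
    fix t i assume a: "i < length (c_msgs (R t)) \<and> fst (snd (c_msgs (R t) ! i)) \<in> P - faulty F"
    then have d: "fst (snd (c_msgs (R t) ! i)) = 1" unfolding pe by simp
    show "\<exists>t'. i \<in> c_dlv (R t')"
      by (rule GF(2)) (use a d in simp_all)
  next
    fix k p' t
    assume a: "p' \<in> P - faulty F \<and> c_q (R t) k p' \<noteq> None \<and>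
       (\<exists>t'. card Q - f \<le> card {q \<in> Q. c_q (R t') k q \<noteq> None})"
    then have p'1: "p' = 1" unfolding pe by simp
    from a obtain t' where c: "card Q - f \<le> card {q \<in> Q. c_q (R t') k q \<noteq> None}" by blast
    have qs: "\<And>t k q. c_q (R t) k q \<noteq> None \<Longrightarrow> q \<in> {1, 2}"
      by (rule run_queriers[OF runR]) (use procR in blast)
    have "2 \<in> {q \<in> Q. c_q (R t') k q \<noteq> None}"
    proof (rule ccontr)
      assume n2: "2 \<notin> {q \<in> Q. c_q (R t') k q \<noteq> None}"
      have "{q \<in> Q. c_q (R t') k q \<noteq> None} \<subseteq> {1}"
      proof
        fix x assume x: "x \<in> {q \<in> Q. c_q (R t') k q \<noteq> None}"
        then have "x \<in> {1, 2}" using qs by blast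
        moreover have "x \<noteq> 2" using x n2 by blast
        ultimately show "x \<in> {1}" by blast
      qed
      then have "card {q \<in> Q. c_q (R t') k q \<noteq> None} \<le> 1" by (rule card_le1)
      then show False using c cQ by linarith
    qed
    then obtain v where v: "c_q (R t') k 2 = Some v" by auto
    have v2: "c_q (R (T0 + T1 + t')) k 2 = Some v" using run_q_persist[OF runR _ v] by simp
    have "c_q (R (T0 + T1 + t')) k 2 = c_q (R (T0 + T1)) k 2"
    proof -
      have "\<And>t p e. T0 + T1 \<le> t \<Longrightarrow> t < T0 + T1 + t' \<Longrightarrow> scR t = Some (p, e) \<Longrightarrow> p \<noteq> 2"
        using proc3 by fastforce
      from run_col_unch[OF runR _ this] show ?thesis by simp
    qed
    then have v3: "c_q (R (T0 + T1)) k 2 = Some v" using v2 by simp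
    have "c_q (R1 T1) k 2 = Some v" using ph2[of T1] v3 by (simp add: sim_def)
    then have av: "ans k = v" by (simp add: ans_def)
    have ok: "resp_ok Q (c_q (R t'') k) (ans k)" if "T0 + T1 \<le> t''" for t''
      using run_q_persist[OF runR that v3] resp_ok_some[OF _ q2] av by simp
    show "\<exists>t'. (k, p') \<in> c_rsp (R t')"
      unfolding p'1 by (rule GF(3)[of t]) (use a p'1 ok in simp_all)
  qed
  note H = sol[unfolded solves_cons_with_oracle_def, THEN spec[of _ F], THEN spec[of _ V],
     THEN spec[of _ ans], THEN spec[of _ scR], THEN spec[of _ R], THEN mp]
  note H2 = H[OF conjI[OF fp[unfolded P_def] conjI[OF cf conjI[OF runR[unfolded P_def] fr[unfolded P_def]]]]]
  have a1: "a_dec A (c_st (R T0) 1) = Some False" using ph1[of T0] T0 by (simp add: sim_def)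
  have a2: "a_dec A (c_st (R (T0 + T1)) 2) = Some True" using ph2[of T1] T1 by (simp add: sim_def)
  have "False = True"
    using conjunct1[OF conjunct2[OF conjunct2[OF H2]], THEN spec[of _ 1], THEN spec[of _ 2],
      THEN spec[of _ T0], THEN spec[of _ "T0 + T1"], THEN spec[of _ False], THEN spec[of _ True]]
      a1 a2 p1 p2 unfolding P_def by simp
  then show False by simp
qed

end
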